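(* Every Cantor space $(X,d)$ has the property*.
   Context: A Cantor space is a compact metric space $(X,d)$ with no isolated points that is totally disconnected (equivalently, of topological dimension zero). $\mathcal{H}(X)$ denotes the set of homeomorphisms of $X$. For continuous maps $f,g:X\to X$ let $d_{C^0}(f,g)=\sup_{x\in X}d(f(x),g(x))$, and for $f,g\in\mathcal{H}(X)$ let $D(f,g)=\max\{d_{C^0}(f,g),d_{C^0}(f^{-1},g^{-1})\}$. An $n$-tuple $(x_1,\dots,x_n)\in X^n$ is proper if $x_i\neq x_j$ for all $1\le i<j\le n$. On $X^n$ use $d_n(\zeta,\eta)=\max_{1\le i\le n}d(x_i,y_i)$ for $\zeta=(x_1,\dots,x_n)$, $\eta=(y_1,\dots,y_n)$, and for a map $\phi$ write $\phi^{(n)}(\zeta)=(\phi(x_1),\dots,\phi(x_n))$. A compact metric space $(X,d)$ has the property* if for every $\epsilon>0$ there is $\delta>0$ such that for every integer $n\ge1$ and every pair of proper $n$-tuples $\zeta,\eta\in X^n$ with $d_n(\zeta,\eta)<\delta$, there exists $\phi\in\mathcal{H}(X)$ with $D(\phi,\mathrm{id}_X)<\epsilon$ and $\phi^{(n)}(\zeta)=\eta$. *)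

theory Defs
  imports "HOL-Analysis.Analysis"
begin

definition totally_disconnected :: "'a::topological_space set \<Rightarrow> bool" where
  "totally_disconnected X \<longleftrightarrow> (\<forall>T. T \<subseteq> X \<and> connected T \<longrightarrow> (\<exists>a. T \<subseteq> {a}))"

definition cantor_space :: "'a::metric_space set \<Rightarrow> bool" where
  "cantor_space X \<longleftrightarrow> compact X \<and> (\<forall>x\<in>X. x islimpt X) \<and> totally_disconnected X"

definition dC0 :: "'a::metric_space set \<Rightarrow> ('a \<Rightarrow> 'a) \<Rightarrow> ('a \<Rightarrow> 'a) \<Rightarrow> real" where
  "dC0 X f g = (SUP x\<in>X. dist (f x) (g x))"

definition dn :: "'a::metric_space list \<Rightarrow> 'a list \<Rightarrow> real" where
  "dn zs ys = Max {dist (zs ! i) (ys ! i) | i. i < length zs}"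

definition property_star :: "'a::metric_space set \<Rightarrow> bool" where
  "property_star X \<longleftrightarrow>
     (\<forall>\<epsilon>>0. \<exists>\<delta>>0. \<forall>n::nat. n \<ge> 1 \<longrightarrow>
        (\<forall>zs ys. length zs = n \<and> length ys = n \<and> set zs \<subseteq> X \<and> set ys \<subseteq> X \<and>
                 distinct zs \<and> distinct ys \<and> dn zs ys < \<delta> \<longrightarrow>
           (\<exists>\<phi> \<psi>. homeomorphism X X \<phi> \<psi> \<and> max (dC0 X \<phi> id) (dC0 X \<psi> id) < \<epsilon>
                   \<and> map \<phi> zs = ys)))"

end

theory Submission
  imports Defs
begin


definition clop :: "'a::metric_space set \<Rightarrow> 'a set \<Rightarrow> bool" where
  "clop A W \<longleftrightarrow> W \<subseteq> A \<and> closed W \<and> closed (A - W)"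

definition zd :: "'a::metric_space set \<Rightarrow> bool" where
  "zd A \<longleftrightarrow> (\<forall>x\<in>A. \<forall>e>0. \<exists>C. x \<in> C \<and> C \<subseteq> ball x e \<and> clop A C)"

definition cs :: "'a::metric_space set \<Rightarrow> bool" where
  "cs A \<longleftrightarrow> compact A \<and> (\<forall>x\<in>A. x islimpt A) \<and> zd A"

lemma cantor_zd:
  fixes X :: "'a::metric_space set"
  assumes "cantor_space X"
  shows "zd X"
  unfolding zd_def
proof (intro ballI allI impI)
  fix x e assume x: "x \<in> X" and e: "(e::real) > 0"
  have cX: "compact X" and td: "totally_disconnected X" using assms by (auto simp: cantor_space_def)
  define T where "T = top_of_set X"
  have cs: "compact_space T" using cX unfolding T_def
    by (simp add: compact_space_subtopology)
  have hs: "Hausdorff_space T" unfolding T_def by (simp add: Hausdorff_space_subtopology)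
  have cc: "connected_component_of_set T x = {x}"
  proof -
    have "connected_component_of_set T x \<subseteq> {x}"
    proof
      fix y assume "y \<in> connected_component_of_set T x"
      then obtain S where "connectedin T S" "x \<in> S" "y \<in> S"
        by (auto simp: connected_component_of_set)
      then have "S \<subseteq> X" "connected S" unfolding T_def by (auto simp: connectedin_subtopology)
      then obtain a where "S \<subseteq> {a}" using td unfolding totally_disconnected_def by blast
      then show "y \<in> {x}" using \<open>x \<in> S\<close> \<open>y \<in> S\<close> by auto
    qed
    moreover have "x \<in> connected_component_of_set T x" using x unfolding T_def
      by (simp add: connected_component_of_refl)
    ultimately show ?thesis by blast
  qed
  have "{x} \<in> quasi_components_of T"
    using quasi_eq_connected_components_of[of T] cs hs cc x
    unfolding connected_components_of_def T_def by auto
  moreover have "compactin T (X - ball x e)" unfolding T_def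
    by (simp add: compactin_subtopology compact_diff cX)
  ultimately have "separated_between T {x} (X - ball x e)"
    using separated_between_quasi_component_compact[of "{x}" T "X - ball x e"] e by (auto simp: disjnt_def)
  then obtain U V where UV: "openin T U" "openin T V" "U \<union> V = X" "disjnt U V" "x \<in> U" "X - ball x e \<subseteq> V"
    unfolding separated_between_def T_def by auto
  have cl: "closed X" using cX by (simp add: compact_imp_closed)
  have "closedin T U" using UV unfolding T_def
    by (metis Diff_cancel Un_Diff Un_commute disjnt_def inf_commute openin_closedin_eq sup_bot_right topspace_euclidean_subtopology Int_Diff_Un Diff_triv)
  then have cU: "closed U" unfolding T_def using cl closedin_closed_trans by blast
  have "closedin T V" using UV unfolding T_def
    by (metis Diff_cancel Un_Diff disjnt_def inf_commute openin_closedin_eq sup_bot_right topspace_euclidean_subtopology Int_Diff_Un Diff_triv)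
  then have cV: "closed V" unfolding T_def using cl closedin_closed_trans by blast
  have "X - U = V" using UV by (auto simp: disjnt_def)
  then have "clop X U" unfolding clop_def using UV cU cV by auto
  moreover have "U \<subseteq> ball x e" using UV by (auto simp: disjnt_def)
  ultimately show "\<exists>C. x \<in> C \<and> C \<subseteq> ball x e \<and> clop X C" using UV by blast
qed

lemma clop_sub: "clop A W \<Longrightarrow> W \<subseteq> A" by (simp add: clop_def)

lemma clop_trans: "clop A P \<Longrightarrow> clop P W \<Longrightarrow> clop A W"
proof -
  assume a: "clop A P" "clop P W"
  have "A - W = (A - P) \<union> (P - W)" using a by (auto simp: clop_def)
  then show ?thesis using a by (auto simp: clop_def)
qed

lemma clop_Int: "clop A U \<Longrightarrow> clop A V \<Longrightarrow> clop A (U \<inter> V)"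
proof -
  assume a: "clop A U" "clop A V"
  have "A - (U \<inter> V) = (A - U) \<union> (A - V)" by auto
  then show ?thesis using a by (auto simp: clop_def)
qed

lemma clop_Diff: "clop A U \<Longrightarrow> clop A V \<Longrightarrow> clop A (U - V)"
proof -
  assume a: "clop A U" "clop A V"
  have "A - (U - V) = (A - U) \<union> V" "U - V = U \<inter> (A - V)" using a by (auto simp: clop_def)
  then show ?thesis using a by (auto simp: clop_def)
qed

lemma clop_Un: "clop A U \<Longrightarrow> clop A V \<Longrightarrow> clop A (U \<union> V)"
proof -
  assume a: "clop A U" "clop A V"
  have "A - (U \<union> V) = (A - U) \<inter> (A - V)" by auto
  then show ?thesis using a by (auto simp: clop_def)
qed

lemma clop_empty: "clop A {} = closed A" by (simp add: clop_def)

lemma clop_Union: "finite F \<Longrightarrow> closed A \<Longrightarrow> (\<And>W. W \<in> F \<Longrightarrow> clop A W) \<Longrightarrow> clop A (\<Union>F)"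
  by (induction F rule: finite_induct) (auto simp: clop_empty intro: clop_Un)

lemma clop_self: "closed A \<Longrightarrow> clop A A" by (simp add: clop_def)

lemma clop_restrict: "clop A C \<Longrightarrow> P \<subseteq> A \<Longrightarrow> closed P \<Longrightarrow> clop P (C \<inter> P)"
proof -
  assume a: "clop A C" "P \<subseteq> A" "closed P"
  have "P - (C \<inter> P) = P \<inter> (A - C)" using a by auto
  then show ?thesis using a by (auto simp: clop_def)
qed

lemma clop_compact: "compact A \<Longrightarrow> clop A W \<Longrightarrow> compact W"
  by (metis clop_def compact_Int_closed inf.absorb2)

lemma clop_bounded: "compact A \<Longrightarrow> clop A W \<Longrightarrow> bounded W"
  using clop_compact compact_imp_bounded by blast

lemma clop_open_nbhd: "clop A W \<Longrightarrow> x \<in> W \<Longrightarrow> \<exists>G. open G \<and> x \<in> G \<and> A \<inter> G = W"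
proof -
  assume a: "clop A W" "x \<in> W"
  show ?thesis
    apply (rule exI[of _ "- (A - W)"]) using a unfolding clop_def
    by (intro conjI open_Compl) auto
qed

lemma cs_clop: "cs A \<Longrightarrow> clop A P \<Longrightarrow> cs P"
proof -
  assume a: "cs A" "clop A P"
  have cA: "compact A" using a by (simp add: cs_def)
  have "compact P" using clop_compact cA a by blast
  moreover have "x islimpt P" if x: "x \<in> P" for x
  proof -
    obtain G where G: "open G" "x \<in> G" "A \<inter> G = P" using clop_open_nbhd a x by blast
    have "x islimpt A" using a x clop_sub by (force simp: cs_def)
    moreover have "eventually (\<lambda>y. y \<in> G) (at x)" using G eventually_at_topological by blast
    ultimately have "x islimpt A \<inter> G" by (rule islimpt_Int_eventually)
    then show ?thesis using G by simp
  qed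
  moreover have "zd P" unfolding zd_def
  proof (intro ballI allI impI)
    fix x e assume "x \<in> P" "(e::real) > 0"
    then obtain C where C: "x \<in> C" "C \<subseteq> ball x e" "clop A C"
      using a clop_sub unfolding cs_def zd_def by blast
    have "clop P (C \<inter> P)" using clop_restrict C a \<open>compact P\<close> clop_sub compact_imp_closed by blast
    then show "\<exists>C. x \<in> C \<and> C \<subseteq> ball x e \<and> clop P C" using C \<open>x \<in> P\<close> by blast
  qed
  ultimately show ?thesis by (simp add: cs_def)
qed

lemma cantor_cs: "cantor_space X \<Longrightarrow> cs X"
  using cantor_zd by (auto simp: cantor_space_def cs_def)

lemma cs_split:
  assumes "cs P" "clop P W" "W \<noteq> {}"
  shows "\<exists>W1 W2. W1 \<noteq> {} \<and> W2 \<noteq> {} \<and> clop P W1 \<and> clop P W2 \<and> W1 \<union> W2 = W \<and> W1 \<inter> W2 = {}"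
proof -
  obtain u where u: "u \<in> W" using assms by blast
  obtain G where G: "open G" "u \<in> G" "P \<inter> G = W" using clop_open_nbhd assms u by blast
  have "u islimpt P" using assms u clop_sub by (force simp: cs_def)
  then obtain v where v: "v \<in> P" "v \<in> G" "v \<noteq> u" using G islimpt_def by metis
  then have "v \<in> W" using G by auto
  have "dist u v > 0" using v by simp
  then obtain C where C: "u \<in> C" "C \<subseteq> ball u (dist u v)" "clop P C"
    using assms u clop_sub unfolding cs_def zd_def by blast
  have "v \<notin> C" using C by auto
  show ?thesis
    apply (rule exI[of _ "W \<inter> C"], rule exI[of _ "W - C"])
    using C u \<open>v \<in> W\<close> \<open>v \<notin> C\<close> assms clop_Int clop_Diff by blast
qed

definition part :: "'a::metric_space set \<Rightarrow> real \<Rightarrow> 'a set set \<Rightarrow> bool" where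
  "part P e F \<longleftrightarrow> finite F \<and> (\<forall>W\<in>F. W \<noteq> {} \<and> clop P W \<and> diameter W < e) \<and> \<Union>F = P \<and> disjoint F"

lemma disjointify:
  assumes "finite C" "compact P" "\<forall>W\<in>C. clop P W \<and> diameter W < e"
  shows "\<exists>F. finite F \<and> (\<forall>W\<in>F. W \<noteq> {} \<and> clop P W \<and> diameter W < e) \<and> \<Union>F = \<Union>C \<and> disjoint F"
  using assms(1,3)
proof (induction C rule: finite_induct)
  case empty
  show ?case by (intro exI[of _ "{}"]) auto
next
  case (insert C0 C)
  have h0: "\<forall>W\<in>C. clop P W \<and> diameter W < e" using insert.prems by blast
  have h1: "clop P C0" "diameter C0 < e" using insert.prems by auto
  obtain F where F: "finite F" "\<forall>W\<in>F. W \<noteq> {} \<and> clop P W \<and> diameter W < e" "\<Union>F = \<Union>C" "disjoint F"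
    using insert.IH[OF h0] by metis
  define D where "D = C0 - \<Union>C"
  have cP: "closed P" using assms(2) by (simp add: compact_imp_closed)
  have "clop P (\<Union>C)" using clop_Union[OF insert.hyps(1) cP] h0 by blast
  then have cD: "clop P D" unfolding D_def using clop_Diff h1(1) by blast
  have bC0: "bounded C0" using clop_bounded assms(2) h1(1) by blast
  have "D \<subseteq> C0" unfolding D_def by blast
  then have "diameter D \<le> diameter C0" using diameter_subset bC0 by blast
  then have dD: "diameter D < e" using h1(2) by linarith
  show ?case
  proof (cases "D = {}")
    case True
    then have "\<Union>(insert C0 C) = \<Union>C" unfolding D_def by blast
    then show ?thesis using F by (intro exI[of _ F]) simp
  next
    case False
    have a: "\<forall>W\<in>F. D \<inter> W = {}" using F(3) unfolding D_def by blast
    have "disjoint (insert D F)" using F(4) a by (simp add: pairwise_insert disjnt_def Int_commute)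
    moreover have "\<Union>(insert D F) = \<Union>(insert C0 C)" using F(3) unfolding D_def by blast
    moreover have "\<forall>W\<in>insert D F. W \<noteq> {} \<and> clop P W \<and> diameter W < e" using F(2) False cD dD by blast
    moreover have "finite (insert D F)" using F(1) by blast
    ultimately show ?thesis by blast
  qed
qed

lemma cs_part:
  assumes "cs P" "e > 0"
  shows "\<exists>F. part P e F"
proof -
  have cP: "compact P" using assms by (simp add: cs_def)
  have "\<forall>x\<in>P. \<exists>C. x \<in> C \<and> C \<subseteq> ball x (e/3) \<and> clop P C"
    using assms by (simp add: cs_def zd_def)
  then obtain C where C: "\<And>x. x \<in> P \<Longrightarrow> x \<in> C x \<and> C x \<subseteq> ball x (e/3) \<and> clop P (C x)"
    by metis
  have "P \<subseteq> (\<Union>x\<in>P. - (P - C x))" using C by auto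
  moreover have "\<And>x. x \<in> P \<Longrightarrow> open (- (P - C x))"
  proof -
    fix x assume "x \<in> P"
    then have "closed (P - C x)" using C clop_def by blast
    then show "open (- (P - C x))" by (rule open_Compl)
  qed
  ultimately obtain K where K: "K \<subseteq> P" "finite K" "P \<subseteq> (\<Union>x\<in>K. - (P - C x))"
    using compactE_image[OF cP, of P "\<lambda>x. - (P - C x)"] by blast
  have UK: "\<Union>(C ` K) = P"
  proof
    show "\<Union>(C ` K) \<subseteq> P" using K C clop_sub by blast
    show "P \<subseteq> \<Union>(C ` K)"
    proof
      fix y assume "y \<in> P"
      then obtain x where "x \<in> K" "y \<in> - (P - C x)" using K by blast
      then show "y \<in> \<Union>(C ` K)" using \<open>y \<in> P\<close> by blast
    qed
  qed
  have dC: "diameter (C x) < e" if "x \<in> P" for x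
  proof -
    have "compact (C x)" using C that cP clop_compact by blast
    moreover have "C x \<noteq> {}" using C[OF that] by blast
    ultimately obtain u v where "u \<in> C x" "v \<in> C x" "dist u v = diameter (C x)"
      using diameter_compact_attained by metis
    moreover have "dist u v \<le> dist u x + dist x v" by (rule dist_triangle)
    moreover have "dist x u < e/3" "dist x v < e/3" using C[OF that] \<open>u \<in> C x\<close> \<open>v \<in> C x\<close> by auto
    moreover have "dist u x = dist x u" by (rule dist_commute)
    ultimately show ?thesis using assms(2) by linarith
  qed
  have H: "\<forall>W\<in>C`K. clop P W \<and> diameter W < e" using K C dC by blast
  have fin: "finite (C ` K)" using K by simp
  have "\<exists>F. finite F \<and> (\<forall>W\<in>F. W \<noteq> {} \<and> clop P W \<and> diameter W < e) \<and> \<Union>F = \<Union>(C ` K) \<and> disjoint F"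
    by (rule disjointify[OF fin cP H])
  then obtain F where F: "finite F \<and> (\<forall>W\<in>F. W \<noteq> {} \<and> clop P W \<and> diameter W < e) \<and> \<Union>F = \<Union>(C ` K) \<and> disjoint F"
    by (rule exE)
  then have "part P e F" unfolding part_def using UK by simp
  then show ?thesis by (rule exI)
qed




lemma partD:
  assumes "part P e F"
  shows "finite F" "\<And>W. W \<in> F \<Longrightarrow> W \<noteq> {}" "\<And>W. W \<in> F \<Longrightarrow> clop P W"
    "\<And>W. W \<in> F \<Longrightarrow> diameter W < e" "\<Union>F = P" "\<And>V W. V \<in> F \<Longrightarrow> W \<in> F \<Longrightarrow> V \<noteq> W \<Longrightarrow> V \<inter> W = {}"
  using assms unfolding part_def pairwise_def disjnt_def by auto

lemma partI:
  assumes "finite F" "\<And>W. W \<in> F \<Longrightarrow> W \<noteq> {} \<and> clop P W \<and> diameter W < e" "\<Union>F = P"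
    "\<And>V W. V \<in> F \<Longrightarrow> W \<in> F \<Longrightarrow> V \<noteq> W \<Longrightarrow> V \<inter> W = {}"
  shows "part P e F"
  using assms unfolding part_def pairwise_def disjnt_def by blast

lemma part_card:
  assumes "cs P" "P \<noteq> {}" "part P e F"
  shows "card F \<le> m \<Longrightarrow> \<exists>F'. part P e F' \<and> card F' = m"
proof (induction m)
  case 0
  then show ?case using assms(3) by (intro exI[of _ F]) simp
next
  case (Suc m)
  show ?case
  proof (cases "card F = Suc m")
    case True
    then show ?thesis using assms(3) by (intro exI[of _ F]) simp
  next
    case False
    then have "card F \<le> m" using Suc.prems by simp
    then obtain F' where F': "part P e F'" "card F' = m" using Suc.IH by metis
    note p = partD[OF F'(1)]
    have "F' \<noteq> {}" using p(5) assms(2) by auto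
    then obtain W where W: "W \<in> F'" by blast
    have WW: "W \<noteq> {}" "clop P W" "diameter W < e" using p W by auto
    obtain W1 W2 where S: "W1 \<noteq> {}" "W2 \<noteq> {}" "clop P W1" "clop P W2" "W1 \<union> W2 = W" "W1 \<inter> W2 = {}"
      using cs_split[OF assms(1) WW(2,1)] by metis
    define F'' where "F'' = insert W1 (insert W2 (F' - {W}))"
    have n1: "W1 \<notin> F' - {W}"
    proof
      assume "W1 \<in> F' - {W}"
      then have "W1 \<inter> W = {}" using p(6) W by auto
      then show False using S by auto
    qed
    have n2: "W2 \<notin> F' - {W}"
    proof
      assume "W2 \<in> F' - {W}"
      then have "W2 \<inter> W = {}" using p(6) W by auto
      then show False using S by auto
    qed
    have n12: "W1 \<noteq> W2" using S by auto
    have "card (F' - {W}) = m - 1" using p(1) W F'(2) by (simp add: card_Diff_singleton)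
    moreover have "card F' > 0" using p(1) W card_gt_0_iff by blast
    then have "m \<ge> 1" using F'(2) by simp
    ultimately have "card F'' = Suc m" unfolding F''_def using n1 n2 n12 p(1)
      by (simp add: card_insert_if)
    moreover have "part P e F''"
    proof (rule partI)
      have bW: "bounded W" using clop_bounded WW assms(1) cs_def by blast
      have d: "diameter W1 \<le> diameter W" "diameter W2 \<le> diameter W"
        using S bW diameter_subset by (metis Un_upper1, metis Un_upper2)
      show "finite F''" unfolding F''_def using p(1) by simp
      show "\<And>V. V \<in> F'' \<Longrightarrow> V \<noteq> {} \<and> clop P V \<and> diameter V < e"
        unfolding F''_def using p S d WW by fastforce
      show "\<Union>F'' = P" unfolding F''_def using p(5) S W by blast
      have a: "\<And>X. X \<in> F' - {W} \<Longrightarrow> X \<inter> W = {}" using p(6) W by blast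
      show "\<And>V U. V \<in> F'' \<Longrightarrow> U \<in> F'' \<Longrightarrow> V \<noteq> U \<Longrightarrow> V \<inter> U = {}"
      proof -
        fix V U assume "V \<in> F''" "U \<in> F''" "V \<noteq> U"
        then consider "V = W1" "U = W2" | "V = W2" "U = W1" | "V \<in> {W1,W2}" "U \<in> F' - {W}"
          | "U \<in> {W1,W2}" "V \<in> F' - {W}" | "U \<in> F' - {W}" "V \<in> F' - {W}"
          unfolding F''_def by blast
        then show "V \<inter> U = {}"
        proof cases
          case 1 then show ?thesis using S by simp
        next
          case 2 then show ?thesis using S by blast
        next
          case 3 then show ?thesis using a[of U] S by blast
        next
          case 4 then show ?thesis using a[of V] S by blast
        next
          case 5 then show ?thesis using p(6) \<open>V \<noteq> U\<close> by blast
        qed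
      qed
    qed
    ultimately show ?thesis by blast
  qed
qed

lemma side:
  assumes "part P e F" "compact P" "\<And>i j. i<n \<Longrightarrow> j<n \<Longrightarrow> i\<noteq>j \<Longrightarrow> e \<le> dist (zs!i) (zs!j)"
  obtains pa where "\<And>i. i<n \<Longrightarrow> zs!i \<in> P \<Longrightarrow> pa i \<in> F \<and> zs!i \<in> pa i"
    "\<And>i W. i<n \<Longrightarrow> W \<in> F \<Longrightarrow> zs!i \<in> W \<Longrightarrow> W = pa i"
    "\<And>i j. i<n \<Longrightarrow> j<n \<Longrightarrow> zs!i \<in> P \<Longrightarrow> zs!j \<in> P \<Longrightarrow> pa i = pa j \<Longrightarrow> i = j"
proof -
  note p = partD[OF assms(1)]
  define pa where "pa i = (SOME W. W \<in> F \<and> zs!i \<in> W)" for i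
  have 1: "pa i \<in> F \<and> zs!i \<in> pa i" if "zs!i \<in> P" for i
  proof -
    have "\<exists>W. W \<in> F \<and> zs!i \<in> W" using p(5) that by blast
    then show ?thesis unfolding pa_def by (rule someI_ex)
  qed
  have 2: "W = pa i" if "W \<in> F" "zs!i \<in> W" for i W
  proof -
    have "zs!i \<in> P" using p(5) that by blast
    then have "pa i \<in> F" "zs!i \<in> pa i" using 1 by auto
    then show ?thesis using p(6)[of W "pa i"] that by blast
  qed
  have 3: "i = j" if "i<n" "j<n" "zs!i \<in> P" "zs!j \<in> P" "pa i = pa j" for i j
  proof (rule ccontr)
    assume "i \<noteq> j"
    then have "e \<le> dist (zs!i) (zs!j)" using assms(3) that by blast
    moreover have "pa i \<in> F" "zs!i \<in> pa i" "zs!j \<in> pa i" using 1 that by auto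
    moreover have "bounded (pa i)" using clop_bounded assms(2) p(3) \<open>pa i \<in> F\<close> by blast
    ultimately have "e \<le> diameter (pa i)" using diameter_bounded_bound by (meson order_trans)
    then show False using p(4) \<open>pa i \<in> F\<close> by fastforce
  qed
  show ?thesis using that 1 2 3 by blast
qed



definition mtch :: "'a::metric_space set \<Rightarrow> 'a set \<Rightarrow> 'a list \<Rightarrow> 'a list \<Rightarrow> ('a set \<times> 'a set) set \<Rightarrow> bool" where
  "mtch A B zs ys M \<longleftrightarrow> finite M \<and> (\<forall>m\<in>M. fst m \<noteq> {} \<and> snd m \<noteq> {} \<and> clop A (fst m) \<and> clop B (snd m))
    \<and> \<Union>(fst ` M) = A \<and> \<Union>(snd ` M) = B
    \<and> (\<forall>m\<in>M. \<forall>m'\<in>M. m \<noteq> m' \<longrightarrow> fst m \<inter> fst m' = {} \<and> snd m \<inter> snd m' = {})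
    \<and> (\<forall>m\<in>M. \<forall>i<length zs. zs!i \<in> fst m \<longleftrightarrow> ys!i \<in> snd m)"

definition mesh :: "('a::metric_space set \<times> 'a set) set \<Rightarrow> real \<Rightarrow> bool" where
  "mesh M e \<longleftrightarrow> (\<forall>m\<in>M. diameter (fst m) < e \<and> diameter (snd m) < e)"

lemma local_match:
  fixes P Q :: "'a::metric_space set"
  assumes cP: "cs P" and cQ: "cs Q" and neP: "P \<noteq> {}" and neQ: "Q \<noteq> {}" and e: "e > 0"
    and len: "length zs = length ys" and dz: "distinct zs" and dy: "distinct ys"
    and pq: "\<forall>i<length zs. zs!i \<in> P \<longleftrightarrow> ys!i \<in> Q"
  shows "\<exists>N. mtch P Q zs ys N \<and> mesh N e"
proof -
  define n where "n = length zs"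
  define IJ where "IJ = {(i,j). i<n \<and> j<n \<and> i\<noteq>j}"
  define D where "D = (\<lambda>(i,j). dist (zs!i) (zs!j)) ` IJ \<union> (\<lambda>(i,j). dist (ys!i) (ys!j)) ` IJ"
  have "IJ \<subseteq> {..<n} \<times> {..<n}" unfolding IJ_def by auto
  then have "finite IJ" by (rule finite_subset) simp
  then have finD: "finite D" unfolding D_def by simp
  have posD: "\<forall>d\<in>D. d > 0"
  proof
    fix d assume "d \<in> D"
    then obtain i j where ij: "i<n" "j<n" "i\<noteq>j" and "d = dist (zs!i) (zs!j) \<or> d = dist (ys!i) (ys!j)"
      unfolding D_def IJ_def by auto
    moreover have "zs!i \<noteq> zs!j" using ij dz nth_eq_iff_index_eq n_def by metis
    moreover have "ys!i \<noteq> ys!j" using ij dy nth_eq_iff_index_eq n_def len by metis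
    ultimately show "d > 0" by auto
  qed
  define e' where "e' = Min (insert e D)"
  have e'pos: "e' > 0" unfolding e'_def using finD posD e by (simp add: Min_gr_iff)
  have e'le: "e' \<le> e" unfolding e'_def using finD by simp
  have e'z: "e' \<le> dist (zs!i) (zs!j)" if "i<n" "j<n" "i\<noteq>j" for i j
  proof -
    have "dist (zs!i) (zs!j) \<in> D" unfolding D_def IJ_def using that by force
    then show ?thesis unfolding e'_def using finD by simp
  qed
  have e'y: "e' \<le> dist (ys!i) (ys!j)" if "i<n" "j<n" "i\<noteq>j" for i j
  proof -
    have "dist (ys!i) (ys!j) \<in> D" unfolding D_def IJ_def using that by force
    then show ?thesis unfolding e'_def using finD by simp
  qed
  obtain FP0 where FP0: "part P e' FP0" using cs_part cP e'pos by blast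
  obtain FQ0 where FQ0: "part Q e' FQ0" using cs_part cQ e'pos by blast
  define m where "m = max (card FP0) (card FQ0)"
  obtain FP where FP: "part P e' FP" "card FP = m" using part_card[OF cP neP FP0, of m] m_def by auto
  obtain FQ where FQ: "part Q e' FQ" "card FQ = m" using part_card[OF cQ neQ FQ0, of m] m_def by auto
  have cpP: "compact P" and cpQ: "compact Q" using cP cQ by (auto simp: cs_def)
  obtain pa where pa1: "\<And>i. i<n \<Longrightarrow> zs!i \<in> P \<Longrightarrow> pa i \<in> FP \<and> zs!i \<in> pa i"
    and pa2: "\<And>i W. i<n \<Longrightarrow> W \<in> FP \<Longrightarrow> zs!i \<in> W \<Longrightarrow> W = pa i"
    and pa3: "\<And>i j. i<n \<Longrightarrow> j<n \<Longrightarrow> zs!i \<in> P \<Longrightarrow> zs!j \<in> P \<Longrightarrow> pa i = pa j \<Longrightarrow> i = j"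
    apply (rule side[of P e' FP n zs, OF FP(1) cpP])
     apply (rule e'z; assumption)
    apply (rule that; assumption)
    done
  obtain qb where qb1: "\<And>i. i<n \<Longrightarrow> ys!i \<in> Q \<Longrightarrow> qb i \<in> FQ \<and> ys!i \<in> qb i"
    and qb2: "\<And>i W. i<n \<Longrightarrow> W \<in> FQ \<Longrightarrow> ys!i \<in> W \<Longrightarrow> W = qb i"
    and qb3: "\<And>i j. i<n \<Longrightarrow> j<n \<Longrightarrow> ys!i \<in> Q \<Longrightarrow> ys!j \<in> Q \<Longrightarrow> qb i = qb j \<Longrightarrow> i = j"
    apply (rule side[of Q e' FQ n ys, OF FQ(1) cpQ])
     apply (rule e'y; assumption)
    apply (rule that; assumption)
    done
  define I where "I = {i. i<n \<and> zs!i \<in> P}"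
  have I: "\<And>i. i \<in> I \<longleftrightarrow> i < n \<and> zs!i \<in> P" "\<And>i. i \<in> I \<longleftrightarrow> i < n \<and> ys!i \<in> Q"
    unfolding I_def using pq n_def by auto
  have finI: "finite I" unfolding I_def by simp
  have injpa: "inj_on pa I" unfolding inj_on_def using pa3 I by blast
  have injqb: "inj_on qb I" unfolding inj_on_def using qb3 I by blast
  note fp = partD[OF FP(1)] and fq = partD[OF FQ(1)]
  define FPa where "FPa = pa ` I"
  define FQb where "FQb = qb ` I"
  have FPa_sub: "FPa \<subseteq> FP" unfolding FPa_def using pa1 I by blast
  have FQb_sub: "FQb \<subseteq> FQ" unfolding FQb_def using qb1 I by blast
  have cPa: "card FPa = card I" unfolding FPa_def using injpa by (rule card_image)
  have cQb: "card FQb = card I" unfolding FQb_def using injqb by (rule card_image)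
  have fPa: "finite FPa" using finite_subset[OF FPa_sub fp(1)] .
  have fQb: "finite FQb" using finite_subset[OF FQb_sub fq(1)] .
  have "card (FP - FPa) = m - card I" using card_Diff_subset[OF fPa FPa_sub] FP(2) cPa by simp
  moreover have "card (FQ - FQb) = m - card I" using card_Diff_subset[OF fQb FQb_sub] FQ(2) cQb by simp
  ultimately have "card (FP - FPa) = card (FQ - FQb)" by simp
  moreover have "finite (FP - FPa)" "finite (FQ - FQb)" using fp(1) fq(1) by auto
  ultimately obtain r where r: "bij_betw r (FP - FPa) (FQ - FQb)"
    using finite_same_card_bij by metis
  define N where "N = (\<lambda>i. (pa i, qb i)) ` I \<union> (\<lambda>W. (W, r W)) ` (FP - FPa)"
  have "fst ` N = pa ` I \<union> (FP - FPa)" unfolding N_def by (simp add: image_Un image_image)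
  then have "fst ` N = FPa \<union> (FP - FPa)" unfolding FPa_def by simp
  then have fstN: "fst ` N = FP" using FPa_sub by (simp add: Un_absorb1)
  have rim: "r ` (FP - FPa) = FQ - FQb" using r by (simp add: bij_betw_def)
  have "snd ` N = qb ` I \<union> r ` (FP - FPa)" unfolding N_def by (simp add: image_Un image_image)
  then have "snd ` N = FQb \<union> (FQ - FQb)" using rim unfolding FQb_def by simp
  then have sndN: "snd ` N = FQ" using FQb_sub by (simp add: Un_absorb1)
  have finN: "finite N" unfolding N_def using finI fp(1) by simp
  have key: "fst u \<noteq> fst u' \<and> snd u \<noteq> snd u'" if H: "u \<in> N" "u' \<in> N" "u \<noteq> u'" for u u'
  proof -
    have injr: "inj_on r (FP - FPa)" using r by (simp add: bij_betw_def)
    have rin: "\<And>W. W \<in> FP - FPa \<Longrightarrow> r W \<in> FQ - FQb" using r bij_betwE by blast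
    consider (a) i j where "i \<in> I" "j \<in> I" "u = (pa i, qb i)" "u' = (pa j, qb j)"
      | (b) i W where "i \<in> I" "W \<in> FP - FPa" "u = (pa i, qb i)" "u' = (W, r W)"
      | (c) i W where "i \<in> I" "W \<in> FP - FPa" "u' = (pa i, qb i)" "u = (W, r W)"
      | (d) W W' where "W \<in> FP - FPa" "W' \<in> FP - FPa" "u = (W, r W)" "u' = (W', r W')"
    proof -
      have "(\<exists>i\<in>I. u = (pa i, qb i)) \<or> (\<exists>W\<in>FP - FPa. u = (W, r W))" using H(1) unfolding N_def by blast
      moreover have "(\<exists>i\<in>I. u' = (pa i, qb i)) \<or> (\<exists>W\<in>FP - FPa. u' = (W, r W))" using H(2) unfolding N_def by blast
      ultimately show ?thesis using that by blast
    qed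
    then show ?thesis
    proof cases
      case (a i j)
      then have "i \<noteq> j" using H(3) by blast
      then show ?thesis using a injpa injqb unfolding inj_on_def by auto
    next
      case (b i W)
      then show ?thesis using rin[of W] unfolding FPa_def FQb_def by auto
    next
      case (c i W)
      then show ?thesis using rin[of W] unfolding FPa_def FQb_def by auto
    next
      case (d W W')
      then have "W \<noteq> W'" using H(3) by blast
      then show ?thesis using d injr unfolding inj_on_def by auto
    qed
  qed
  have pt: "fst u = pa i \<longleftrightarrow> snd u = qb i" if H: "u \<in> N" "i \<in> I" for u i
  proof -
    have rin: "\<And>W. W \<in> FP - FPa \<Longrightarrow> r W \<in> FQ - FQb" using r bij_betwE by blast
    consider (a) j where "j \<in> I" "u = (pa j, qb j)" | (b) W where "W \<in> FP - FPa" "u = (W, r W)"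
      using H(1) unfolding N_def by auto
    then show ?thesis
    proof cases
      case (a j)
      then show ?thesis using H(2) injpa injqb unfolding inj_on_def by auto
    next
      case (b W)
      then show ?thesis using rin[of W] H(2) unfolding FPa_def FQb_def by auto
    qed
  qed
  have "mtch P Q zs ys N"
    unfolding mtch_def
  proof (intro conjI)
    show "finite N" by (rule finN)
    show "\<forall>m\<in>N. fst m \<noteq> {} \<and> snd m \<noteq> {} \<and> clop P (fst m) \<and> clop Q (snd m)"
    proof
      fix u assume "u \<in> N"
      then have "fst u \<in> FP" "snd u \<in> FQ" using fstN sndN by auto
      then show "fst u \<noteq> {} \<and> snd u \<noteq> {} \<and> clop P (fst u) \<and> clop Q (snd u)" using fp fq by blast
    qed
    show "\<Union>(fst ` N) = P" using fstN fp(5) by simp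
    show "\<Union>(snd ` N) = Q" using sndN fq(5) by simp
    show "\<forall>m\<in>N. \<forall>m'\<in>N. m \<noteq> m' \<longrightarrow> fst m \<inter> fst m' = {} \<and> snd m \<inter> snd m' = {}"
    proof (intro ballI impI)
      fix u u' assume "u \<in> N" "u' \<in> N" "u \<noteq> u'"
      then have "fst u \<noteq> fst u'" "snd u \<noteq> snd u'" using key by auto
      moreover have "fst u \<in> FP" "snd u \<in> FQ" "fst u' \<in> FP" "snd u' \<in> FQ"
        using fstN sndN \<open>u \<in> N\<close> \<open>u' \<in> N\<close> by auto
      ultimately show "fst u \<inter> fst u' = {} \<and> snd u \<inter> snd u' = {}" using fp(6) fq(6) by blast
    qed
    show "\<forall>m\<in>N. \<forall>i<length zs. zs!i \<in> fst m \<longleftrightarrow> ys!i \<in> snd m"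
    proof (intro ballI allI impI)
      fix u i assume u: "u \<in> N" and i: "i < length zs"
      have uF: "fst u \<in> FP" "snd u \<in> FQ" using fstN sndN u by auto
      show "zs!i \<in> fst u \<longleftrightarrow> ys!i \<in> snd u"
      proof (cases "i \<in> I")
        case True
        have "zs!i \<in> fst u \<longleftrightarrow> fst u = pa i"
          using pa1 pa2 uF True I by metis
        moreover have "ys!i \<in> snd u \<longleftrightarrow> snd u = qb i"
          using qb1 qb2 uF True I by metis
        ultimately show ?thesis using pt u True by blast
      next
        case False
        then have "zs!i \<notin> P" "ys!i \<notin> Q" using I i n_def by auto
        moreover have "fst u \<subseteq> P" "snd u \<subseteq> Q" using uF fp(3) fq(3) clop_sub by blast+
        ultimately show ?thesis by blast
      qed
    qed
  qed
  moreover have "mesh N e" unfolding mesh_def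
  proof
    fix u assume "u \<in> N"
    then have "fst u \<in> FP" "snd u \<in> FQ" using fstN sndN by auto
    then show "diameter (fst u) < e \<and> diameter (snd u) < e" using fp(4) fq(4) e'le by force
  qed
  ultimately show ?thesis by blast
qed



definition refines :: "('a set \<times> 'a set) set \<Rightarrow> ('a set \<times> 'a set) set \<Rightarrow> bool" where
  "refines M' M \<longleftrightarrow> (\<forall>m'\<in>M'. \<exists>m\<in>M. fst m' \<subseteq> fst m \<and> snd m' \<subseteq> snd m)"

lemma mtchD:
  assumes "mtch A B zs ys M"
  shows "finite M" "\<And>m. m \<in> M \<Longrightarrow> fst m \<noteq> {}" "\<And>m. m \<in> M \<Longrightarrow> snd m \<noteq> {}"
    "\<And>m. m \<in> M \<Longrightarrow> clop A (fst m)" "\<And>m. m \<in> M \<Longrightarrow> clop B (snd m)"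
    "\<Union>(fst ` M) = A" "\<Union>(snd ` M) = B"
    "\<And>m m'. m \<in> M \<Longrightarrow> m' \<in> M \<Longrightarrow> m \<noteq> m' \<Longrightarrow> fst m \<inter> fst m' = {}"
    "\<And>m m'. m \<in> M \<Longrightarrow> m' \<in> M \<Longrightarrow> m \<noteq> m' \<Longrightarrow> snd m \<inter> snd m' = {}"
    "\<And>m i. m \<in> M \<Longrightarrow> i < length zs \<Longrightarrow> zs!i \<in> fst m \<longleftrightarrow> ys!i \<in> snd m"
  using assms unfolding mtch_def by blast+

lemma refine_step:
  fixes A B :: "'a::metric_space set"
  assumes cA: "cs A" and cB: "cs B" and M: "mtch A B zs ys M" and e: "e > 0"
    and len: "length zs = length ys" and dz: "distinct zs" and dy: "distinct ys"
  shows "\<exists>M'. mtch A B zs ys M' \<and> refines M' M \<and> mesh M' e"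
proof -
  note md = mtchD[OF M]
  have "\<forall>m\<in>M. \<exists>N. mtch (fst m) (snd m) zs ys N \<and> mesh N e"
  proof
    fix m assume m: "m \<in> M"
    have "cs (fst m)" using cs_clop[OF cA md(4)[OF m]] .
    moreover have "cs (snd m)" using cs_clop[OF cB md(5)[OF m]] .
    moreover have "\<forall>i<length zs. zs!i \<in> fst m \<longleftrightarrow> ys!i \<in> snd m" using md(10)[OF m] by blast
    ultimately show "\<exists>N. mtch (fst m) (snd m) zs ys N \<and> mesh N e"
      using local_match[OF _ _ md(2)[OF m] md(3)[OF m] e len dz dy] by blast
  qed
  then obtain NN where NN: "\<And>m. m \<in> M \<Longrightarrow> mtch (fst m) (snd m) zs ys (NN m) \<and> mesh (NN m) e"
    by metis
  define M' where "M' = (\<Union>m\<in>M. NN m)"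
  have sub: "fst u \<subseteq> fst m \<and> snd u \<subseteq> snd m" if "m \<in> M" "u \<in> NN m" for m u
    using mtchD(4,5)[OF conjunct1[OF NN[OF that(1)]] that(2)] clop_sub by blast
  have "mtch A B zs ys M'"
    unfolding mtch_def
  proof (intro conjI)
    show "finite M'" unfolding M'_def using md(1) NN mtchD(1) by blast
    show "\<forall>u\<in>M'. fst u \<noteq> {} \<and> snd u \<noteq> {} \<and> clop A (fst u) \<and> clop B (snd u)"
    proof
      fix u assume "u \<in> M'"
      then obtain m where m: "m \<in> M" "u \<in> NN m" unfolding M'_def by blast
      note nd = mtchD[OF conjunct1[OF NN[OF m(1)]]]
      show "fst u \<noteq> {} \<and> snd u \<noteq> {} \<and> clop A (fst u) \<and> clop B (snd u)"
        using nd(2,3,4,5)[OF m(2)] md(4,5)[OF m(1)] clop_trans by blast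
    qed
    show "\<Union>(fst ` M') = A"
    proof -
      have "\<Union>(fst ` M') = (\<Union>m\<in>M. \<Union>(fst ` NN m))" unfolding M'_def by blast
      also have "\<dots> = (\<Union>m\<in>M. fst m)" using mtchD(6) NN by (metis (no_types, lifting) SUP_cong)
      finally show ?thesis using md(6) by simp
    qed
    show "\<Union>(snd ` M') = B"
    proof -
      have "\<Union>(snd ` M') = (\<Union>m\<in>M. \<Union>(snd ` NN m))" unfolding M'_def by blast
      also have "\<dots> = (\<Union>m\<in>M. snd m)" using mtchD(7) NN by (metis (no_types, lifting) SUP_cong)
      finally show ?thesis using md(7) by simp
    qed
    show "\<forall>u\<in>M'. \<forall>u'\<in>M'. u \<noteq> u' \<longrightarrow> fst u \<inter> fst u' = {} \<and> snd u \<inter> snd u' = {}"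
    proof (intro ballI impI)
      fix u u' assume "u \<in> M'" "u' \<in> M'" "u \<noteq> u'"
      then obtain m m' where m: "m \<in> M" "u \<in> NN m" "m' \<in> M" "u' \<in> NN m'" unfolding M'_def by blast
      show "fst u \<inter> fst u' = {} \<and> snd u \<inter> snd u' = {}"
      proof (cases "m = m'")
        case True
        note nd = mtchD[OF conjunct1[OF NN[OF m(1)]]]
        show ?thesis using nd(8,9) m True \<open>u \<noteq> u'\<close> by blast
      next
        case False
        have "fst m \<inter> fst m' = {}" "snd m \<inter> snd m' = {}" using md(8,9) m False by blast+
        then show ?thesis using sub[OF m(1,2)] sub[OF m(3,4)] by blast
      qed
    qed
    show "\<forall>u\<in>M'. \<forall>i<length zs. zs!i \<in> fst u \<longleftrightarrow> ys!i \<in> snd u"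
    proof (intro ballI allI impI)
      fix u i assume "u \<in> M'" "i < length zs"
      then obtain m where m: "m \<in> M" "u \<in> NN m" unfolding M'_def by blast
      note nd = mtchD[OF conjunct1[OF NN[OF m(1)]]]
      show "zs!i \<in> fst u \<longleftrightarrow> ys!i \<in> snd u" using nd(10)[OF m(2) \<open>i < length zs\<close>] .
    qed
  qed
  moreover have "refines M' M" unfolding refines_def M'_def using sub by blast
  moreover have "mesh M' e" unfolding mesh_def M'_def using NN unfolding mesh_def by blast
  ultimately show ?thesis by blast
qed



lemma refines_refl: "refines M M" unfolding refines_def by blast

lemma refines_trans: "refines M3 M2 \<Longrightarrow> refines M2 M1 \<Longrightarrow> refines M3 M1"
  unfolding refines_def by (meson order_trans)

lemma pair_unique:
  assumes "mtch A B zs ys M" "m \<in> M" "m' \<in> M" "x \<in> fst m" "x \<in> fst m'"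
  shows "m = m'"
  using mtchD(8)[OF assms(1,2,3)] assms(4,5) by blast

lemma pair_exists:
  assumes "mtch A B zs ys M" "x \<in> A"
  shows "\<exists>m\<in>M. x \<in> fst m"
  using mtchD(6)[OF assms(1)] assms(2) by blast

context
  fixes A B :: "'a::metric_space set" and zs ys :: "'a list" and S :: "nat \<Rightarrow> ('a set \<times> 'a set) set"
  assumes mt: "\<And>k. mtch A B zs ys (S k)" and rf: "\<And>k. refines (S (Suc k)) (S k)"
    and ms: "\<And>k. mesh (S (Suc k)) (1 / real (Suc k))" and cB: "compact B"
begin

lemma refines_le: "j \<le> k \<Longrightarrow> refines (S k) (S j)"
proof (induction k rule: dec_induct)
  case base
  then show ?case by (rule refines_refl)
next
  case (step k)
  then show ?case using rf refines_trans by blast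
qed

lemma nested:
  assumes "j \<le> k" "m \<in> S k" "m' \<in> S j" "x \<in> fst m" "x \<in> fst m'"
  shows "snd m \<subseteq> snd m'"
proof -
  obtain m'' where "m'' \<in> S j" "fst m \<subseteq> fst m''" "snd m \<subseteq> snd m''"
    using refines_le[OF assms(1)] assms(2) unfolding refines_def by blast
  moreover have "m'' = m'" using pair_unique[OF mt] calculation assms(3,4,5) by blast
  ultimately show ?thesis by blast
qed

lemma snd_bounded: "m \<in> S k \<Longrightarrow> bounded (snd m)"
  using clop_bounded[OF cB mtchD(5)[OF mt]] by blast

lemma small: "m \<in> S (Suc k) \<Longrightarrow> y \<in> snd m \<Longrightarrow> y' \<in> snd m \<Longrightarrow> dist y y' < 1 / real (Suc k)"
proof -
  assume a: "m \<in> S (Suc k)" "y \<in> snd m" "y' \<in> snd m"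
  have "dist y y' \<le> diameter (snd m)" using diameter_bounded_bound[OF snd_bounded[OF a(1)] a(2,3)] .
  moreover have "diameter (snd m) < 1 / real (Suc k)" using ms[of k] a(1) unfolding mesh_def by blast
  ultimately show ?thesis by linarith
qed

lemma follow_unique:
  assumes "\<forall>k. \<exists>m\<in>S k. x \<in> fst m \<and> y \<in> snd m" "\<forall>k. \<exists>m\<in>S k. x \<in> fst m \<and> y' \<in> snd m"
  shows "y = y'"
proof (rule ccontr)
  assume "y \<noteq> y'"
  then have "dist y y' > 0" by simp
  then obtain k where k: "inverse (real (Suc k)) < dist y y'" using reals_Archimedean by blast
  obtain m where m: "m \<in> S (Suc k)" "x \<in> fst m" "y \<in> snd m" using assms(1) by blast
  obtain m' where m': "m' \<in> S (Suc k)" "x \<in> fst m'" "y' \<in> snd m'" using assms(2) by blast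
  have "m = m'" using pair_unique[OF mt m(1) m'(1) m(2) m'(2)] .
  then have "dist y y' < 1 / real (Suc k)" using small m m' by blast
  then show False using k by (simp add: inverse_eq_divide)
qed

lemma follow_exists:
  assumes x: "x \<in> A"
  shows "\<exists>y. \<forall>k. \<exists>m\<in>S k. x \<in> fst m \<and> y \<in> snd m"
proof -
  define F where "F = {snd m | m k. m \<in> S k \<and> x \<in> fst m}"
  have "B \<inter> \<Inter>F \<noteq> {}"
  proof (rule compact_imp_fip[OF cB])
    show "closed T" if "T \<in> F" for T
      using that mtchD(5)[OF mt] unfolding F_def clop_def by blast
    show "B \<inter> \<Inter>F' \<noteq> {}" if "finite F'" "F' \<subseteq> F" for F'
    proof -
      have "\<forall>T\<in>F'. \<exists>k m. m \<in> S k \<and> x \<in> fst m \<and> T = snd m" using that(2) unfolding F_def by blast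
      then obtain lev where lev: "\<And>T. T \<in> F' \<Longrightarrow> \<exists>m. m \<in> S (lev T) \<and> x \<in> fst m \<and> T = snd m" by metis
      define K where "K = Max (insert 0 (lev ` F'))"
      have Kge: "lev T \<le> K" if "T \<in> F'" for T unfolding K_def using that \<open>finite F'\<close> by simp
      obtain mK where mK: "mK \<in> S K" "x \<in> fst mK" using pair_exists[OF mt x] by blast
      have "snd mK \<subseteq> T" if T: "T \<in> F'" for T
      proof -
        obtain m where "m \<in> S (lev T)" "x \<in> fst m" "T = snd m" using lev[OF T] by blast
        then show ?thesis using nested[OF Kge[OF T] mK(1)] mK(2) by blast
      qed
      moreover have "snd mK \<subseteq> B" "snd mK \<noteq> {}" using mtchD(3,5)[OF mt mK(1)] clop_sub by blast+
      ultimately show ?thesis by blast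
    qed
  qed
  then obtain y where y: "y \<in> B" "y \<in> \<Inter>F" by blast
  have "\<exists>m\<in>S k. x \<in> fst m \<and> y \<in> snd m" for k
  proof -
    obtain m where "m \<in> S k" "x \<in> fst m" using pair_exists[OF mt x] by blast
    moreover then have "snd m \<in> F" unfolding F_def by blast
    ultimately show ?thesis using y by blast
  qed
  then show ?thesis by blast
qed

definition fol :: "'a \<Rightarrow> 'a" where
  "fol x = (SOME y. \<forall>k. \<exists>m\<in>S k. x \<in> fst m \<and> y \<in> snd m)"

lemma fol: "x \<in> A \<Longrightarrow> \<forall>k. \<exists>m\<in>S k. x \<in> fst m \<and> fol x \<in> snd m"
  unfolding fol_def using follow_exists by (rule someI_ex)

lemma fol_eq: "x \<in> A \<Longrightarrow> \<forall>k. \<exists>m\<in>S k. x \<in> fst m \<and> y \<in> snd m \<Longrightarrow> fol x = y"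
  using fol follow_unique by blast

lemma fol_in: "x \<in> A \<Longrightarrow> fol x \<in> B"
  using fol[of x] mtchD(5)[OF mt] clop_sub by blast

lemma fol_pair: "x \<in> A \<Longrightarrow> m \<in> S k \<Longrightarrow> x \<in> fst m \<Longrightarrow> fol x \<in> snd m"
  using fol[of x] pair_unique[OF mt] by blast

lemma fol_cont: "continuous_on A fol"
  unfolding continuous_on_iff
proof (intro ballI allI impI)
  fix x and e :: real assume x: "x \<in> A" and e: "e > 0"
  obtain k where k: "inverse (real (Suc k)) < e" using reals_Archimedean e by blast
  obtain m where m: "m \<in> S (Suc k)" "x \<in> fst m" using pair_exists[OF mt x] by blast
  have "closed (A - fst m)" using mtchD(4)[OF mt m(1)] unfolding clop_def by blast
  then have "open (- (A - fst m))" by (rule open_Compl)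
  moreover have "x \<in> - (A - fst m)" using m by blast
  ultimately obtain d where d: "d > 0" "ball x d \<subseteq> - (A - fst m)" using open_contains_ball by blast
  show "\<exists>d>0. \<forall>x'\<in>A. dist x' x < d \<longrightarrow> dist (fol x') (fol x) < e"
  proof (intro exI conjI ballI impI)
    show "d > 0" by (rule d(1))
    fix x' assume x': "x' \<in> A" "dist x' x < d"
    then have "x' \<in> ball x d" by (simp add: dist_commute)
    then have "x' \<in> fst m" using d(2) x'(1) by blast
    then have "fol x' \<in> snd m" "fol x \<in> snd m" using fol_pair m x x' by blast+
    then have "dist (fol x') (fol x) < 1 / real (Suc k)" using small m(1) by blast
    then show "dist (fol x') (fol x) < e" using k by (simp add: inverse_eq_divide)
  qed
qed

lemma follow_all:
  "\<exists>h. continuous_on A h \<and> (\<forall>x\<in>A. h x \<in> B) \<and> (\<forall>x\<in>A. \<forall>k. \<forall>m\<in>S k. x \<in> fst m \<longrightarrow> h x \<in> snd m)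
     \<and> (\<forall>x\<in>A. \<forall>y. (\<forall>k. \<exists>m\<in>S k. x \<in> fst m \<and> y \<in> snd m) \<longrightarrow> h x = y)"
  apply (rule exI[of _ fol])
  using fol_cont fol_in fol_pair fol_eq by blast

end



primrec seqM :: "(nat \<Rightarrow> 'b \<Rightarrow> 'b \<Rightarrow> bool) \<Rightarrow> 'b \<Rightarrow> nat \<Rightarrow> 'b" where
  "seqM R x0 0 = x0" | "seqM R x0 (Suc k) = (SOME y. R k (seqM R x0 k) y)"

lemma seqM_prop:
  assumes "Q x0" "\<And>k x. Q x \<Longrightarrow> \<exists>y. R k x y" "\<And>k x y. R k x y \<Longrightarrow> Q y"
  shows "Q (seqM R x0 k) \<and> R k (seqM R x0 k) (seqM R x0 (Suc k))"
proof (induction k)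
  case 0
  have "\<exists>y. R 0 x0 y" using assms(1,2) by blast
  then have "R 0 x0 (SOME y. R 0 x0 y)" by (rule someI_ex)
  then show ?case using assms(1) by simp
next
  case (Suc k)
  then have q: "Q (seqM R x0 (Suc k))" using assms(3) by blast
  then have "\<exists>y. R (Suc k) (seqM R x0 (Suc k)) y" using assms(2) by blast
  then have "R (Suc k) (seqM R x0 (Suc k)) (SOME y. R (Suc k) (seqM R x0 (Suc k)) y)" by (rule someI_ex)
  then show ?case using q by (simp del: seqM.simps(2)) (simp only: seqM.simps(2))
qed

lemma mtch_swap:
  assumes "mtch A B zs ys M" "length zs = length ys"
  shows "mtch B A ys zs (prod.swap ` M)"
proof -
  note md = mtchD[OF assms(1)]
  have f: "fst ` prod.swap ` M = snd ` M" "snd ` prod.swap ` M = fst ` M" by (auto simp: image_image)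
  show ?thesis unfolding mtch_def
  proof (intro conjI)
    show "finite (prod.swap ` M)" using md(1) by simp
    show "\<forall>m\<in>prod.swap ` M. fst m \<noteq> {} \<and> snd m \<noteq> {} \<and> clop B (fst m) \<and> clop A (snd m)"
      using md(2-5) by auto
    show "\<Union>(fst ` prod.swap ` M) = B" using f md(7) by simp
    show "\<Union>(snd ` prod.swap ` M) = A" using f md(6) by simp
    show "\<forall>m\<in>prod.swap ` M. \<forall>m'\<in>prod.swap ` M. m \<noteq> m' \<longrightarrow> fst m \<inter> fst m' = {} \<and> snd m \<inter> snd m' = {}"
    proof (intro ballI impI)
      fix u u' assume "u \<in> prod.swap ` M" "u' \<in> prod.swap ` M" "u \<noteq> u'"
      then obtain v v' where "v \<in> M" "v' \<in> M" "u = prod.swap v" "u' = prod.swap v'" "v \<noteq> v'" by blast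
      then show "fst u \<inter> fst u' = {} \<and> snd u \<inter> snd u' = {}" using md(8,9) by simp
    qed
    show "\<forall>m\<in>prod.swap ` M. \<forall>i<length ys. ys!i \<in> fst m \<longleftrightarrow> zs!i \<in> snd m"
      using md(10) assms(2) by auto
  qed
qed

lemma refines_swap: "refines M' M \<Longrightarrow> refines (prod.swap ` M') (prod.swap ` M)"
  unfolding refines_def
proof (intro ballI)
  fix u assume r: "\<forall>m'\<in>M'. \<exists>m\<in>M. fst m' \<subseteq> fst m \<and> snd m' \<subseteq> snd m" and "u \<in> prod.swap ` M'"
  then obtain v where v: "v \<in> M'" "u = prod.swap v" by blast
  then obtain m where "m \<in> M" "fst v \<subseteq> fst m" "snd v \<subseteq> snd m" using r by blast
  then show "\<exists>m\<in>prod.swap ` M. fst u \<subseteq> fst m \<and> snd u \<subseteq> snd m"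
    using v by (intro bexI[of _ "prod.swap m"]) auto
qed

lemma mesh_swap: "mesh M e \<Longrightarrow> mesh (prod.swap ` M) e"
  unfolding mesh_def by auto


lemma brouwer:
  fixes A B :: "'a::metric_space set"
  assumes cA: "cs A" and cB: "cs B" and M0: "mtch A B zs ys M0" and len: "length zs = length ys"
    and dz: "distinct zs" and dy: "distinct ys" and sz: "set zs \<subseteq> A"
  shows "\<exists>h g. homeomorphism A B h g \<and> (\<forall>m\<in>M0. \<forall>x\<in>fst m. h x \<in> snd m)
           \<and> (\<forall>m\<in>M0. \<forall>y\<in>snd m. g y \<in> fst m) \<and> map h zs = ys"
proof -
  define R where "R k M M' \<longleftrightarrow> mtch A B zs ys M' \<and> refines M' M \<and> mesh M' (1 / real (Suc k))" for k M M'
  define S where "S = seqM R M0"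
  have "mtch A B zs ys (S k) \<and> R k (S k) (S (Suc k))" for k
    unfolding S_def
  proof (rule seqM_prop[of "mtch A B zs ys"])
    show "mtch A B zs ys M0" by (rule M0)
    show "\<exists>y. R k x y" if "mtch A B zs ys x" for k x
      unfolding R_def using refine_step[OF cA cB that _ len dz dy, of "1 / real (Suc k)"] by simp
    show "mtch A B zs ys y" if "R k x y" for k x y using that unfolding R_def by blast
  qed
  then have mt: "\<And>k. mtch A B zs ys (S k)" and rf: "\<And>k. refines (S (Suc k)) (S k)"
    and ms: "\<And>k. mesh (S (Suc k)) (1 / real (Suc k))" unfolding R_def by blast+
  have S0: "S 0 = M0" unfolding S_def by simp
  have cpA: "compact A" and cpB: "compact B" using cA cB by (auto simp: cs_def)
  obtain h where hc: "continuous_on A h" and hB: "\<forall>x\<in>A. h x \<in> B"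
    and hp: "\<forall>x\<in>A. \<forall>k. \<forall>m\<in>S k. x \<in> fst m \<longrightarrow> h x \<in> snd m"
    and hu: "\<forall>x\<in>A. \<forall>y. (\<forall>k. \<exists>m\<in>S k. x \<in> fst m \<and> y \<in> snd m) \<longrightarrow> h x = y"
    using follow_all[OF mt rf ms cpB] by blast
  define S' where "S' k = prod.swap ` S k" for k
  have mt': "\<And>k. mtch B A ys zs (S' k)" unfolding S'_def using mtch_swap[OF mt len] .
  have rf': "\<And>k. refines (S' (Suc k)) (S' k)" unfolding S'_def using refines_swap[OF rf] .
  have ms': "\<And>k. mesh (S' (Suc k)) (1 / real (Suc k))" unfolding S'_def using mesh_swap[OF ms] .
  obtain g where gc: "continuous_on B g" and gA: "\<forall>y\<in>B. g y \<in> A"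
    and gp: "\<forall>y\<in>B. \<forall>k. \<forall>m\<in>S' k. y \<in> fst m \<longrightarrow> g y \<in> snd m"
    and gu: "\<forall>y\<in>B. \<forall>x. (\<forall>k. \<exists>m\<in>S' k. y \<in> fst m \<and> x \<in> snd m) \<longrightarrow> g y = x"
    using follow_all[OF mt' rf' ms' cpA] by blast
  have ghx: "g (h x) = x" if x: "x \<in> A" for x
  proof -
    have "\<exists>m\<in>S' k. h x \<in> fst m \<and> x \<in> snd m" for k
    proof -
      obtain m where m: "m \<in> S k" "x \<in> fst m" using pair_exists[OF mt x] by blast
      then have "h x \<in> snd m" using hp x by blast
      then show ?thesis using m unfolding S'_def by (intro bexI[of _ "prod.swap m"]) auto
    qed
    then show ?thesis using gu hB x by blast
  qed
  have hgy: "h (g y) = y" if y: "y \<in> B" for y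
  proof -
    have "\<exists>m\<in>S k. g y \<in> fst m \<and> y \<in> snd m" for k
    proof -
      obtain m where m: "m \<in> S' k" "y \<in> fst m" using pair_exists[OF mt' y] by blast
      then have "g y \<in> snd m" using gp y by blast
      moreover obtain m0 where "m0 \<in> S k" "m = prod.swap m0" using m(1) unfolding S'_def by blast
      ultimately show ?thesis using m by (intro bexI[of _ m0]) auto
    qed
    then show ?thesis using hu gA y by blast
  qed
  have "homeomorphism A B h g"
    unfolding homeomorphism_def
  proof (intro conjI)
    show "continuous_on A h" by (rule hc)
    show "continuous_on B g" by (rule gc)
    show "h ` A = B" using hB gA hgy by (metis image_eqI subsetI subset_antisym image_subsetI)
    show "g ` B = A" using hB gA ghx by (metis image_eqI subsetI subset_antisym image_subsetI)
    show "\<forall>x\<in>A. g (h x) = x" using ghx by blast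
    show "\<forall>y\<in>B. h (g y) = y" using hgy by blast
  qed
  moreover have "\<forall>m\<in>M0. \<forall>x\<in>fst m. h x \<in> snd m"
  proof (intro ballI)
    fix m x assume "m \<in> M0" "x \<in> fst m"
    moreover then have "x \<in> A" using mtchD(4)[OF M0] clop_sub by blast
    ultimately show "h x \<in> snd m" using hp S0 by blast
  qed
  moreover have "\<forall>m\<in>M0. \<forall>y\<in>snd m. g y \<in> fst m"
  proof (intro ballI)
    fix m y assume m: "m \<in> M0" "y \<in> snd m"
    moreover then have "y \<in> B" using mtchD(5)[OF M0] clop_sub by blast
    moreover have "prod.swap m \<in> S' 0" using m S0 unfolding S'_def by blast
    ultimately show "g y \<in> fst m" using gp by fastforce
  qed
  moreover have "map h zs = ys"
  proof (rule nth_equalityI)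
    show "length (map h zs) = length ys" using len by simp
    fix i assume "i < length (map h zs)"
    then have i: "i < length zs" by simp
    then have zA: "zs!i \<in> A" using sz nth_mem by blast
    have "\<exists>m\<in>S k. zs!i \<in> fst m \<and> ys!i \<in> snd m" for k
    proof -
      obtain m where m: "m \<in> S k" "zs!i \<in> fst m" using pair_exists[OF mt zA] by blast
      then show ?thesis using mtchD(10)[OF mt m(1) i] by blast
    qed
    then have "h (zs!i) = ys!i" using hu zA by blast
    then show "map h zs ! i = ys ! i" using i by simp
  qed
  ultimately show ?thesis by blast
qed



lemma diam2: "diameter {x, y} \<le> dist x (y::'a::metric_space)"
proof -
  have "compact {x, y}" by simp
  then obtain u v where "u \<in> {x,y}" "v \<in> {x,y}" "dist u v = diameter {x,y}"
    using diameter_compact_attained by blast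
  then show ?thesis by (auto simp: dist_commute)
qed

lemma dC0_bound:
  assumes "X \<noteq> {}" "\<And>x. x \<in> X \<Longrightarrow> dist (f x) x \<le> c"
  shows "dC0 X f id \<le> c"
  unfolding dC0_def using assms by (auto intro!: cSUP_least)

theorem lemma1p1:
  fixes X :: "'a::metric_space set"
  assumes "cantor_space X"
  shows "property_star X"
  unfolding property_star_def
proof (intro allI impI)
  fix \<epsilon> :: real assume \<epsilon>: "\<epsilon> > 0"
  have cX: "cs X" using cantor_cs[OF assms] .
  have cpX: "compact X" using cX by (simp add: cs_def)
  show "\<exists>\<delta>>0. \<forall>n::nat. n \<ge> 1 \<longrightarrow>
        (\<forall>zs ys. length zs = n \<and> length ys = n \<and> set zs \<subseteq> X \<and> set ys \<subseteq> X \<and>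
                 distinct zs \<and> distinct ys \<and> dn zs ys < \<delta> \<longrightarrow>
           (\<exists>\<phi> \<psi>. homeomorphism X X \<phi> \<psi> \<and> max (dC0 X \<phi> id) (dC0 X \<psi> id) < \<epsilon>
                   \<and> map \<phi> zs = ys))"
  proof (cases "X = {}")
    case True
    show ?thesis
    proof (intro exI[of _ 1] conjI allI impI)
      fix n :: nat and zs ys :: "'a list"
      assume "1 \<le> n" "length zs = n \<and> length ys = n \<and> set zs \<subseteq> X \<and> set ys \<subseteq> X \<and>
                 distinct zs \<and> distinct ys \<and> dn zs ys < 1"
      then have False using True by (cases zs) auto
      then show "\<exists>\<phi> \<psi>. homeomorphism X X \<phi> \<psi> \<and> max (dC0 X \<phi> id) (dC0 X \<psi> id) < \<epsilon> \<and> map \<phi> zs = ys" ..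
    qed simp
  next
    case False
    obtain U where U: "part X \<epsilon> U" using cs_part[OF cX \<epsilon>] by blast
    note pu = partD[OF U]
    have Une: "U \<noteq> {}" using pu(5) False by auto
    define C where "C = (\<lambda>W. - (X - W)) ` U"
    have "C \<noteq> {}" using Une unfolding C_def by simp
    moreover have "X \<subseteq> \<Union>C" unfolding C_def using pu(5) by blast
    moreover have "\<And>B. B \<in> C \<Longrightarrow> open B"
    proof -
      fix B assume "B \<in> C"
      then obtain W where "W \<in> U" "B = - (X - W)" unfolding C_def by blast
      moreover then have "closed (X - W)" using pu(3) clop_def by blast
      ultimately show "open B" using open_Compl by blast
    qed
    ultimately obtain \<delta> where \<delta>: "\<delta> > 0" "\<And>T. T \<subseteq> X \<Longrightarrow> diameter T < \<delta> \<Longrightarrow> \<exists>B\<in>C. T \<subseteq> B"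
      using Lebesgue_number_lemma[OF cpX] by metis
    have same: "\<exists>W\<in>U. x \<in> W \<and> y \<in> W" if xy: "x \<in> X" "y \<in> X" "dist x y < \<delta>" for x y
    proof -
      have "diameter {x,y} < \<delta>" using diam2[of x y] xy(3) by linarith
      then obtain B where "B \<in> C" "{x,y} \<subseteq> B" using \<delta>(2)[of "{x,y}"] xy by blast
      then obtain W where "W \<in> U" "{x,y} \<subseteq> - (X - W)" unfolding C_def by blast
      then show ?thesis using xy(1,2) by blast
    qed
    show ?thesis
    proof (intro exI[of _ \<delta>] conjI allI impI)
      show "\<delta> > 0" by (rule \<delta>(1))
      fix n :: nat and zs ys :: "'a list"
      assume n: "1 \<le> n" and H: "length zs = n \<and> length ys = n \<and> set zs \<subseteq> X \<and> set ys \<subseteq> X \<and>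
                 distinct zs \<and> distinct ys \<and> dn zs ys < \<delta>"
      have close: "dist (zs!i) (ys!i) < \<delta>" if "i < n" for i
      proof -
        have "finite {dist (zs ! i) (ys ! i) |i. i < length zs}" by simp
        moreover have "dist (zs!i) (ys!i) \<in> {dist (zs ! i) (ys ! i) |i. i < length zs}" using that H by auto
        ultimately have "dist (zs!i) (ys!i) \<le> dn zs ys" unfolding dn_def by (rule Max_ge)
        then show ?thesis using H by linarith
      qed
      define M0 where "M0 = (\<lambda>W. (W, W)) ` U"
      have "mtch X X zs ys M0" unfolding mtch_def
      proof (intro conjI)
        show "finite M0" unfolding M0_def using pu(1) by simp
        show "\<forall>m\<in>M0. fst m \<noteq> {} \<and> snd m \<noteq> {} \<and> clop X (fst m) \<and> clop X (snd m)"
          unfolding M0_def using pu(2,3) by auto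
        show "\<Union>(fst ` M0) = X" "\<Union>(snd ` M0) = X" unfolding M0_def using pu(5) by (auto simp: image_image)
        show "\<forall>m\<in>M0. \<forall>m'\<in>M0. m \<noteq> m' \<longrightarrow> fst m \<inter> fst m' = {} \<and> snd m \<inter> snd m' = {}"
          unfolding M0_def using pu(6) by auto
        show "\<forall>m\<in>M0. \<forall>i<length zs. zs!i \<in> fst m \<longleftrightarrow> ys!i \<in> snd m"
        proof (intro ballI allI impI)
          fix m i assume m: "m \<in> M0" and i: "i < length zs"
          obtain W where W: "W \<in> U" "m = (W, W)" using m unfolding M0_def by blast
          have "zs!i \<in> X" "ys!i \<in> X" using H i nth_mem by (metis subsetD)+
          then obtain W' where W': "W' \<in> U" "zs!i \<in> W'" "ys!i \<in> W'" using same close H i by metis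
          show "zs!i \<in> fst m \<longleftrightarrow> ys!i \<in> snd m"
            using W W' pu(6)[of W W'] by auto
        qed
      qed
      then obtain h g where hg: "homeomorphism X X h g" "\<forall>m\<in>M0. \<forall>x\<in>fst m. h x \<in> snd m"
        "\<forall>m\<in>M0. \<forall>y\<in>snd m. g y \<in> fst m" "map h zs = ys"
        using brouwer[OF cX cX _ _ _ _] H by metis
      define c where "c = Max (diameter ` U)"
      have "c < \<epsilon>" unfolding c_def using pu(1,4) Une by simp
      have hb: "dist (h x) x \<le> c" if xX: "x \<in> X" for x
      proof -
        obtain W where W: "W \<in> U" "x \<in> W" using pu(5) xX by blast
        then have "h x \<in> W" using hg(2) unfolding M0_def by auto
        then have "dist (h x) x \<le> diameter W"
          using diameter_bounded_bound[OF clop_bounded[OF cpX pu(3)[OF W(1)]]] W(2) by blast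
        moreover have "diameter W \<le> c" unfolding c_def using pu(1) W(1) by simp
        ultimately show ?thesis by linarith
      qed
      have gb: "dist (g x) x \<le> c" if xX: "x \<in> X" for x
      proof -
        obtain W where W: "W \<in> U" "x \<in> W" using pu(5) xX by blast
        then have "g x \<in> W" using hg(3) unfolding M0_def by auto
        then have "dist (g x) x \<le> diameter W"
          using diameter_bounded_bound[OF clop_bounded[OF cpX pu(3)[OF W(1)]]] W(2) by blast
        moreover have "diameter W \<le> c" unfolding c_def using pu(1) W(1) by simp
        ultimately show ?thesis by linarith
      qed
      have "dC0 X h id \<le> c" "dC0 X g id \<le> c" using dC0_bound[OF False] hb gb by blast+
      then have "max (dC0 X h id) (dC0 X g id) < \<epsilon>" using \<open>c < \<epsilon>\<close> by simp
      then show "\<exists>\<phi> \<psi>. homeomorphism X X \<phi> \<psi> \<and> max (dC0 X \<phi> id) (dC0 X \<psi> id) < \<epsilon> \<and> map \<phi> zs = ys"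
        using hg by blast
    qed
  qed
qed


end
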